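(* Let $m,n$ be positive integers, $r\le\min\{m,n\}$ a nonnegative integer and $a\in\{0,1,\dots,r\}$. If $Q(\lambda)$ is an $m\times n$ complex matrix pencil with $Q\in{\cal C}_a^r$ and normal rank of $Q$ equal to $r$, then (i) $\varepsilon(Q)\leq a$ and (ii) $\eta(Q)\leq r-a$.
   Context: A matrix pencil is $A+\lambda B$ with complex matrices $A,B$. The normal rank is the rank over $\mathbb{C}(\lambda)$. The degree of a vector polynomial is the maximum degree of its entries. ${\cal C}_a^r$ is the set of all $m\times n$ pencils $u_1(\lambda)v_1(\lambda)^T+\cdots+u_r(\lambda)v_r(\lambda)^T$ with $u_i\in\mathbb{C}[\lambda]^m$, $v_i\in\mathbb{C}[\lambda]^n$ of degree at most $1$, $\deg u_1=\cdots=\deg u_a=0$ and $\deg v_{a+1}=\cdots=\deg v_r=0$. In the Kronecker canonical form of $Q$, the right singular blocks $L_{\varepsilon_1},\dots,L_{\varepsilon_p}$ and left singular blocks $L_{\eta_1}^T,\dots,L_{\eta_q}^T$ (where $L_k$ is the $k\times(k+1)$ pencil with $\lambda$ at $(i,i)$ and $1$ at $(i,i+1)$) have orders called the right (column) and left (row) minimal indices of $Q$; $\varepsilon(Q)=\sum_i\varepsilon_i$ and $\eta(Q)=\sum_j\eta_j$ denote their sums. *)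

theory Defs
  imports "Jordan_Normal_Form.Jordan_Normal_Form" "Jordan_Normal_Form.DL_Rank"
          "HOL-Computational_Algebra.Fraction_Field"
begin

text \<open>A complex m x n pencil A + lambda B is represented by the pair of complex
  matrices (A, B).  Its associated matrix of polynomials in lambda:\<close>

definition pencil_poly :: "complex mat \<Rightarrow> complex mat \<Rightarrow> complex poly mat" where
  "pencil_poly A B = mat (dim_row A) (dim_col A) (\<lambda>(i,j). [: A $$ (i,j), B $$ (i,j) :])"

definition normal_rank :: "complex mat \<Rightarrow> complex mat \<Rightarrow> nat" where
  "normal_rank A B = vec_space.rank (dim_row A) (map_mat to_fract (pencil_poly A B))"

definition vdeg :: "complex poly vec \<Rightarrow> nat" where
  "vdeg u = Max (insert 0 {degree (u $ i) | i. i < dim_vec u})"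

text \<open>The set C_a^r of m x n pencils u_1 v_1^T + ... + u_r v_r^T with
  deg u_i, deg v_i at most 1, deg u_1 = ... = deg u_a = 0 and
  deg v_(a+1) = ... = deg v_r = 0 (vectors indexed 0..r-1 here).\<close>

definition in_C :: "nat \<Rightarrow> nat \<Rightarrow> nat \<Rightarrow> nat \<Rightarrow> complex mat \<Rightarrow> complex mat \<Rightarrow> bool" where
  "in_C m n a r A B \<longleftrightarrow>
     A \<in> carrier_mat m n \<and> B \<in> carrier_mat m n \<and>
     (\<exists>u v :: nat \<Rightarrow> complex poly vec.
        (\<forall>k<r. u k \<in> carrier_vec m \<and> v k \<in> carrier_vec n \<and>
               vdeg (u k) \<le> 1 \<and> vdeg (v k) \<le> 1) \<and>
        (\<forall>k<a. vdeg (u k) = 0) \<and>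
        (\<forall>k. a \<le> k \<and> k < r \<longrightarrow> vdeg (v k) = 0) \<and>
        pencil_poly A B = mat m n (\<lambda>(i,j). \<Sum>k<r. u k $ i * v k $ j))"

text \<open>Kronecker blocks, each given as a pencil (A-part, B-part).
  L_k is k x (k+1) with lambda at (i,i) and 1 at (i,i+1).\<close>

definition L_block :: "nat \<Rightarrow> complex mat \<times> complex mat" where
  "L_block k = (mat k (Suc k) (\<lambda>(i,j). if Suc i = j then 1 else 0),
                mat k (Suc k) (\<lambda>(i,j). if i = j then 1 else 0))"

definition LT_block :: "nat \<Rightarrow> complex mat \<times> complex mat" where
  "LT_block k = (transpose_mat (fst (L_block k)), transpose_mat (snd (L_block k)))"

definition fin_block :: "nat \<times> complex \<Rightarrow> complex mat \<times> complex mat" where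
  "fin_block km = (jordan_block (fst km) (snd km), 1\<^sub>m (fst km))"

definition inf_block :: "nat \<Rightarrow> complex mat \<times> complex mat" where
  "inf_block k = (1\<^sub>m k, jordan_block k 0)"

text \<open>Q = A + lambda B has Kronecker canonical form with right minimal indices
  eps, left minimal indices eta, finite Jordan blocks fin and infinite blocks inf:
  there are invertible constant P, R with P (A + lambda B) R equal to the block
  diagonal pencil.\<close>

definition kcf :: "complex mat \<Rightarrow> complex mat \<Rightarrow> nat list \<Rightarrow> nat list \<Rightarrow>
                   (nat \<times> complex) list \<Rightarrow> nat list \<Rightarrow> bool" where
  "kcf A B eps eta fin infb \<longleftrightarrow>
     (\<forall>p\<in>set fin. fst p > 0) \<and> (\<forall>k\<in>set infb. k > 0) \<and>
     (let blocks = map L_block eps @ map LT_block eta @ map fin_block fin @ map inf_block infb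
      in \<exists>P R. P \<in> carrier_mat (dim_row A) (dim_row A) \<and> R \<in> carrier_mat (dim_col A) (dim_col A) \<and>
               invertible_mat P \<and> invertible_mat R \<and>
               P * A * R = diag_block_mat (map fst blocks) \<and>
               P * B * R = diag_block_mat (map snd blocks))"

end

theory Submission
  imports Defs
begin


lemma diag_mult:
  fixes f g :: "'b \<Rightarrow> 'a::comm_ring_1 mat"
  assumes "\<forall>x\<in>set l. dim_col (f x) = dim_row (g x)"
  shows "diag_block_mat (map f l) * diag_block_mat (map g l) = diag_block_mat (map (\<lambda>x. f x * g x) l)"
  using assms
proof (induct l)
  case Nil
  then show ?case by (intro eq_matI, auto)
next
  case (Cons x l)
  let ?A = "f x" let ?B = "g x"
  let ?DA = "diag_block_mat (map f l)" let ?DB = "diag_block_mat (map g l)"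
  have IH: "?DA * ?DB = diag_block_mat (map (\<lambda>x. f x * g x) l)" using Cons by auto
  have d: "dim_col ?A = dim_row ?B" using Cons by auto
  have "map dim_col (map f l) = map dim_row (map g l)"
    using Cons(2) by simp
  hence "sum_list (map dim_col (map f l)) = sum_list (map dim_row (map g l))" by (rule arg_cong)
  hence dd: "dim_col ?DA = dim_row ?DB" by (simp add: dim_diag_block_mat)
  have "diag_block_mat (map f (x#l)) * diag_block_mat (map g (x#l)) =
     four_block_mat ?A (0\<^sub>m (dim_row ?A) (dim_col ?DA)) (0\<^sub>m (dim_row ?DA) (dim_col ?A)) ?DA *
     four_block_mat ?B (0\<^sub>m (dim_row ?B) (dim_col ?DB)) (0\<^sub>m (dim_row ?DB) (dim_col ?B)) ?DB"
    by (simp add: Let_def)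
  also have "\<dots> = four_block_mat (?A * ?B + 0\<^sub>m (dim_row ?A) (dim_col ?DA) * 0\<^sub>m (dim_row ?DB) (dim_col ?B))
        (?A * 0\<^sub>m (dim_row ?B) (dim_col ?DB) + 0\<^sub>m (dim_row ?A) (dim_col ?DA) * ?DB)
        (0\<^sub>m (dim_row ?DA) (dim_col ?A) * ?B + ?DA * 0\<^sub>m (dim_row ?DB) (dim_col ?B))
        (0\<^sub>m (dim_row ?DA) (dim_col ?A) * 0\<^sub>m (dim_row ?B) (dim_col ?DB) + ?DA * ?DB)"
    by (rule mult_four_block_mat[of _ _ "dim_col ?A" _ "dim_col ?DA" _ _ _ _ "dim_col ?B" _ "dim_col ?DB"],
        auto simp: d dd)
  also have "\<dots> = four_block_mat (?A * ?B) (0\<^sub>m (dim_row ?A) (dim_col ?DB)) (0\<^sub>m (dim_row ?DA) (dim_col ?B)) (?DA * ?DB)"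
    by (intro cong_four_block_mat; rule eq_matI; simp add: d dd)
  also have "\<dots> = diag_block_mat (map (\<lambda>x. f x * g x) (x#l))"
    by (simp add: Let_def IH[symmetric])
  finally show ?case .
qed

lemma det_diag:
  fixes As :: "'a::idom mat list"
  assumes "\<forall>A\<in>set As. dim_row A = dim_col A"
  shows "det (diag_block_mat As) = prod_list (map det As)"
  using assms
proof (induct As)
  case Nil
  then show ?case by (simp add: det_dim_zero)
next
  case (Cons A As)
  let ?D = "diag_block_mat As"
  have sq: "dim_row ?D = dim_col ?D" using diag_block_mat_square[of As] Cons(2) by auto
  have "det (diag_block_mat (A#As)) = det A * det ?D"
    by (simp add: Let_def, rule det_four_block_mat_upper_right_zero[of _ "dim_row A" _ "dim_row ?D"],
      insert Cons(2) sq, auto)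
  then show ?case using Cons by auto
qed


definition constm :: "complex poly mat \<Rightarrow> bool" where
  "constm M \<longleftrightarrow> (\<forall>x\<in>elements_mat M. degree x = 0)"
definition colst :: "nat \<Rightarrow> complex poly mat \<Rightarrow> bool" where
  "colst a M \<longleftrightarrow> (\<forall>i<dim_row M. \<forall>k<dim_col M. degree (M$$(i,k)) \<le> (if k<a then 0 else 1))"
definition rowst :: "nat \<Rightarrow> complex poly mat \<Rightarrow> bool" where
  "rowst a M \<longleftrightarrow> (\<forall>k<dim_row M. \<forall>j<dim_col M. degree (M$$(k,j)) \<le> (if k<a then 1 else 0))"

lemma constmD: "constm M \<Longrightarrow> i < dim_row M \<Longrightarrow> j < dim_col M \<Longrightarrow> degree (M$$(i,j)) = 0"
  unfolding constm_def by auto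

lemma constm_mult_colst:
  assumes "constm E" "colst a W" "dim_col E = dim_row W"
  shows "colst a (E*W)"
  unfolding colst_def
proof (intro allI impI)
  fix i k assume i: "i < dim_row (E*W)" and k: "k < dim_col (E*W)"
  have "(E*W)$$(i,k) = (\<Sum>l<dim_row W. E$$(i,l) * W$$(l,k))"
    using i k assms(3) by (simp add: scalar_prod_def atLeast0LessThan)
  also have "degree \<dots> \<le> (if k<a then 0 else 1)"
  proof (rule degree_sum_le)
    fix l assume l: "l \<in> {..<dim_row W}"
    have "degree (E$$(i,l) * W$$(l,k)) \<le> degree (E$$(i,l)) + degree (W$$(l,k))" by (rule degree_mult_le)
    also have "degree (E$$(i,l)) = 0" using constmD[OF assms(1)] i l assms(3) by auto
    also have "degree (W$$(l,k)) \<le> (if k<a then 0 else 1)" using assms(2) l k unfolding colst_def by auto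
    finally show "degree (E$$(i,l) * W$$(l,k)) \<le> (if k<a then 0 else 1)" by simp
  qed auto
  finally show "degree ((E*W)$$(i,k)) \<le> (if k<a then 0 else 1)" .
qed

lemma rowst_mult_constm:
  assumes "rowst a Z" "constm F" "dim_col Z = dim_row F"
  shows "rowst a (Z*F)"
  unfolding rowst_def
proof (intro allI impI)
  fix i k assume i: "i < dim_row (Z*F)" and k: "k < dim_col (Z*F)"
  have "(Z*F)$$(i,k) = (\<Sum>l<dim_row F. Z$$(i,l) * F$$(l,k))"
    using i k assms(3) by (simp add: scalar_prod_def atLeast0LessThan)
  also have "degree \<dots> \<le> (if i<a then 1 else 0)"
  proof (rule degree_sum_le)
    fix l assume l: "l \<in> {..<dim_row F}"
    have "degree (Z$$(i,l) * F$$(l,k)) \<le> degree (Z$$(i,l)) + degree (F$$(l,k))" by (rule degree_mult_le)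
    also have "degree (F$$(l,k)) = 0" using constmD[OF assms(2)] k l by auto
    also have "degree (Z$$(i,l)) \<le> (if i<a then 1 else 0)" using assms(1) l i assms(3) unfolding rowst_def by auto
    finally show "degree (Z$$(i,l) * F$$(l,k)) \<le> (if i<a then 1 else 0)" by simp
  qed auto
  finally show "degree ((Z*F)$$(i,k)) \<le> (if i<a then 1 else 0)" .
qed

lemma degree_signof_mult: "degree (signof p * (x :: complex poly)) \<le> degree x"
proof -
  have "degree (signof p * x) \<le> degree (signof p :: complex poly) + degree x" by (rule degree_mult_le)
  also have "degree (signof p :: complex poly) = 0" by (simp add: degree_of_int)
  finally show ?thesis by simp
qed

lemma det_colst:
  assumes "colst a M" "M \<in> carrier_mat r r" "a \<le> r"
  shows "degree (det M) \<le> r - a"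
proof -
  have "det M = (\<Sum>p \<in> {p. p permutes {0..<r}}. signof p * (\<Prod>i = 0..<r. M $$ (i, p i)))"
    by (rule det_def'[OF assms(2)])
  also have "degree \<dots> \<le> r - a"
  proof (rule degree_sum_le)
    fix p assume "p \<in> {p. p permutes {0..<r}}"
    hence p: "p permutes {0..<r}" by auto
    have "degree (signof p * (\<Prod>i = 0..<r. M $$ (i, p i))) \<le> degree (\<Prod>i = 0..<r. M $$ (i, p i))"
      by (rule degree_signof_mult)
    also have "\<dots> \<le> (\<Sum>i = 0..<r. degree (M $$ (i, p i)))"
      using degree_prod_sum_le[of "{0..<r}" "\<lambda>i. M $$ (i, p i)"] by (simp add: o_def)
    also have "\<dots> \<le> (\<Sum>i = 0..<r. (\<lambda>j. if j < a then 0 else 1) (p i))"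
    proof (rule sum_mono)
      fix i assume i: "i \<in> {0..<r}"
      hence "p i < r" using permutes_in_image[OF p] by auto
      thus "degree (M $$ (i, p i)) \<le> (\<lambda>j. if j < a then 0 else 1) (p i)"
        using assms(1,2) i unfolding colst_def by auto
    qed
    also have "\<dots> = (\<Sum>j = 0..<r. (if j < a then 0 else 1::nat))"
      using sum.permute[OF p, of "\<lambda>j. if j < a then 0 else 1::nat"] by (simp add: o_def)
    also have "\<dots> = card {a..<r}"
    proof -
      have "(\<Sum>j = 0..<r. (if j < a then 0 else 1::nat)) = card ({0..<r} - {j. j < a})"
        by (simp add: sum.If_cases Diff_eq)
      also have "{0..<r} - {j. j < a} = {a..<r}" by auto
      finally show ?thesis by simp
    qed
    also have "\<dots> = r - a" by simp
    finally show "degree (signof p * (\<Prod>i = 0..<r. M $$ (i, p i))) \<le> r - a" .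
  qed (simp add: finite_permutations)
  finally show ?thesis .
qed

lemma det_rowst:
  assumes "rowst a M" "M \<in> carrier_mat r r" "a \<le> r"
  shows "degree (det M) \<le> a"
proof -
  have "det M = (\<Sum>p \<in> {p. p permutes {0..<r}}. signof p * (\<Prod>i = 0..<r. M $$ (i, p i)))"
    by (rule det_def'[OF assms(2)])
  also have "degree \<dots> \<le> a"
  proof (rule degree_sum_le)
    fix p assume "p \<in> {p. p permutes {0..<r}}"
    hence p: "p permutes {0..<r}" by auto
    have "degree (signof p * (\<Prod>i = 0..<r. M $$ (i, p i))) \<le> degree (\<Prod>i = 0..<r. M $$ (i, p i))"
      by (rule degree_signof_mult)
    also have "\<dots> \<le> (\<Sum>i = 0..<r. degree (M $$ (i, p i)))"
      using degree_prod_sum_le[of "{0..<r}" "\<lambda>i. M $$ (i, p i)"] by (simp add: o_def)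
    also have "\<dots> \<le> (\<Sum>i = 0..<r. (if i < a then 1 else 0::nat))"
    proof (rule sum_mono)
      fix i assume i: "i \<in> {0..<r}"
      hence "p i < r" using permutes_in_image[OF p] by auto
      thus "degree (M $$ (i, p i)) \<le> (if i < a then 1 else 0)"
        using assms(1,2) i unfolding rowst_def by auto
    qed
    also have "\<dots> = card {0..<a}"
    proof -
      have "(\<Sum>j = 0..<r. (if j < a then 1 else 0::nat)) = card ({0..<r} \<inter> {j. j < a})"
        by (simp add: sum.If_cases)
      also have "{0..<r} \<inter> {j. j < a} = {0..<a}" using assms(3) by auto
      finally show ?thesis by simp
    qed
    also have "\<dots> = a" by simp
    finally show "degree (signof p * (\<Prod>i = 0..<r. M $$ (i, p i))) \<le> a" .
  qed (simp add: finite_permutations)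
  finally show ?thesis .
qed


abbreviation xp :: "complex poly" where "xp \<equiv> [:0,1:]"

datatype blk = BL nat | BLT nat | BF "nat \<times> complex" | BI nat

fun orig :: "blk \<Rightarrow> complex mat \<times> complex mat" where
  "orig (BL k) = L_block k" | "orig (BLT k) = LT_block k"
| "orig (BF p) = fin_block p" | "orig (BI k) = inf_block k"

fun rb :: "blk \<Rightarrow> nat" where
  "rb (BL k) = k" | "rb (BLT k) = k" | "rb (BF p) = fst p" | "rb (BI k) = k"

definition Kb :: "blk \<Rightarrow> complex poly mat" where
  "Kb b = pencil_poly (fst (orig b)) (snd (orig b))"

definition pL :: "nat \<Rightarrow> complex poly mat" where
  "pL k = mat k (Suc k) (\<lambda>(i,j). if Suc i = j then 1 else if i = j then xp else 0)"

lemma orig_dims: "dim_row (fst (orig b)) = dim_row (snd (orig b)) \<and> dim_col (fst (orig b)) = dim_col (snd (orig b))"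
  by (cases b, auto simp: L_block_def LT_block_def fin_block_def inf_block_def jordan_block_def)

lemma Kb_BL: "Kb (BL k) = pL k"
  unfolding Kb_def orig.simps pencil_poly_def pL_def L_block_def by (intro eq_matI, auto)

lemma Kb_BLT: "Kb (BLT k) = transpose_mat (pL k)"
  unfolding Kb_def orig.simps pencil_poly_def pL_def L_block_def LT_block_def by (intro eq_matI, auto)

lemma Kb_BF: "Kb (BF (k,\<mu>)) = mat k k (\<lambda>(i,j). if i = j then [:\<mu>,1:] else if Suc i = j then 1 else 0)"
  unfolding Kb_def orig.simps pencil_poly_def fin_block_def jordan_block_def by (intro eq_matI, auto)

lemma Kb_BI: "Kb (BI k) = mat k k (\<lambda>(i,j). if i = j then 1 else if Suc i = j then xp else 0)"
  unfolding Kb_def orig.simps pencil_poly_def inf_block_def jordan_block_def by (intro eq_matI, auto)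

definition S0 :: "nat \<Rightarrow> complex poly mat" where
  "S0 k = mat (Suc k) k (\<lambda>(i,j). if i = Suc j then 1 else 0)"
definition Sk :: "nat \<Rightarrow> complex poly mat" where
  "Sk k = mat (Suc k) k (\<lambda>(i,j). if i = j then 1 else 0)"

lemma sum_delta_mult: "j < (n::nat) \<Longrightarrow> (\<Sum>l\<in>{0..<n}. f l * (if l = j then 1 else (0::'a::semiring_1))) = f j"
proof -
  assume "j < n"
  have "(\<Sum>l\<in>{0..<n}. f l * (if l = j then 1 else (0::'a))) = (\<Sum>l\<in>{0..<n}. if l = j then f l else 0)"
    by (rule sum.cong, auto)
  also have "\<dots> = f j" using \<open>j < n\<close> by (simp add: sum.delta sum.delta')
  finally show ?thesis .
qed

lemma pL_Sk: "pL k * Sk k = mat k k (\<lambda>(i,j). if Suc i = j then 1 else if i = j then xp else 0)"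
proof (rule eq_matI)
  fix i j assume i: "i < dim_row (mat k k (\<lambda>(i,j). if Suc i = j then 1 else if i = j then xp else 0))"
    and j: "j < dim_col (mat k k (\<lambda>(i,j). if Suc i = j then 1 else if i = j then xp else (0::complex poly)))"
  have "(pL k * Sk k) $$ (i,j) = (\<Sum>l\<in>{0..<Suc k}. pL k $$ (i,l) * (if l = j then 1 else 0))"
    using i j unfolding pL_def Sk_def by (simp add: scalar_prod_def)
  also have "\<dots> = pL k $$ (i,j)" using j by (intro sum_delta_mult, auto)
  finally show "(pL k * Sk k) $$ (i,j) = mat k k (\<lambda>(i,j). if Suc i = j then 1 else if i = j then xp else 0) $$ (i,j)"
    using i j unfolding pL_def by auto
qed (auto simp: pL_def Sk_def)

lemma pL_S0: "pL k * S0 k = mat k k (\<lambda>(i,j). if i = j then 1 else if i = Suc j then xp else 0)"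
proof (rule eq_matI)
  fix i j assume i: "i < dim_row (mat k k (\<lambda>(i,j). if i = j then 1 else if i = Suc j then xp else 0))"
    and j: "j < dim_col (mat k k (\<lambda>(i,j). if i = j then 1 else if i = Suc j then xp else (0::complex poly)))"
  have "(pL k * S0 k) $$ (i,j) = (\<Sum>l\<in>{0..<Suc k}. pL k $$ (i,l) * (if l = Suc j then 1 else 0))"
    using i j unfolding pL_def S0_def by (simp add: scalar_prod_def)
  also have "\<dots> = pL k $$ (i,Suc j)" using j by (intro sum_delta_mult, auto)
  finally show "(pL k * S0 k) $$ (i,j) = mat k k (\<lambda>(i,j). if i = j then 1 else if i = Suc j then xp else 0) $$ (i,j)"
    using i j unfolding pL_def by auto
qed (auto simp: pL_def S0_def)

lemma det_pL_Sk: "det (pL k * Sk k) = xp ^ k"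
proof -
  have "det (pL k * Sk k) = prod_list (diag_mat (pL k * Sk k))"
    by (rule det_upper_triangular[of _ k], auto simp: pL_Sk)
  also have "\<dots> = xp ^ k" by (simp add: prod_list_diag_prod pL_Sk)
  finally show ?thesis .
qed

lemma det_pL_S0: "det (pL k * S0 k) = 1"
proof -
  have "det (pL k * S0 k) = prod_list (diag_mat (pL k * S0 k))"
    by (rule det_lower_triangular[of k], auto simp: pL_S0)
  also have "\<dots> = 1" by (simp add: prod_list_diag_prod pL_S0)
  finally show ?thesis .
qed

lemma det_Kb_BF: "det (Kb (BF p)) \<noteq> 0"
proof -
  obtain k \<mu> where p: "p = (k,\<mu>)" by force
  have "det (Kb (BF p)) = prod_list (diag_mat (Kb (BF p)))"
    by (rule det_upper_triangular[of _ k], auto simp: p Kb_BF)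
  also have "\<dots> = [:\<mu>,1:] ^ k" by (simp add: prod_list_diag_prod p Kb_BF)
  finally show ?thesis by simp
qed

lemma det_Kb_BI: "det (Kb (BI k)) = 1"
proof -
  have "det (Kb (BI k)) = prod_list (diag_mat (Kb (BI k)))"
    by (rule det_upper_triangular[of _ k], auto simp: Kb_BI)
  also have "\<dots> = 1" by (simp add: prod_list_diag_prod Kb_BI)
  finally show ?thesis .
qed


lemma pencil_index: "i < dim_row A \<Longrightarrow> j < dim_col A \<Longrightarrow> pencil_poly A B $$ (i,j) = [:A$$(i,j), B$$(i,j):]"
  "dim_row (pencil_poly A B) = dim_row A" "dim_col (pencil_poly A B) = dim_col A"
  unfolding pencil_poly_def by auto

lemma pencil_diag:
  assumes "\<forall>b\<in>set bs. dim_row (fst b) = dim_row (snd b) \<and> dim_col (fst b) = dim_col (snd b)"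
  shows "pencil_poly (diag_block_mat (map fst bs)) (diag_block_mat (map snd bs))
         = diag_block_mat (map (\<lambda>b. pencil_poly (fst b) (snd b)) bs)"
  using assms
proof (induct bs)
  case Nil
  then show ?case by (intro eq_matI, auto simp: pencil_poly_def)
next
  case (Cons b bs)
  obtain A1 A2 where b: "b = (A1,A2)" by force
  let ?D1 = "diag_block_mat (map fst bs)" let ?D2 = "diag_block_mat (map snd bs)"
  let ?D = "diag_block_mat (map (\<lambda>b. pencil_poly (fst b) (snd b)) bs)"
  have IH: "pencil_poly ?D1 ?D2 = ?D" using Cons by auto
  have dA: "dim_row A1 = dim_row A2" "dim_col A1 = dim_col A2" using Cons(2) b by auto
  have e1: "(\<Sum>x\<leftarrow>bs. dim_row (fst x)) = (\<Sum>x\<leftarrow>bs. dim_row (snd x))"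
    using Cons(2) by (intro arg_cong[where f=sum_list] map_cong) auto
  have e2: "(\<Sum>x\<leftarrow>bs. dim_col (fst x)) = (\<Sum>x\<leftarrow>bs. dim_col (snd x))"
    using Cons(2) by (intro arg_cong[where f=sum_list] map_cong) auto
  have dD: "dim_row ?D1 = dim_row ?D2" "dim_col ?D1 = dim_col ?D2"
    by (simp_all add: dim_diag_block_mat o_def e1 e2)
  have dD': "dim_row ?D = dim_row ?D1" "dim_col ?D = dim_col ?D1"
    using IH[symmetric] by (simp_all add: pencil_index)
  show ?case
  proof (rule eq_matI)
    fix i j
    assume i: "i < dim_row (diag_block_mat (map (\<lambda>b. pencil_poly (fst b) (snd b)) (b # bs)))"
      and j: "j < dim_col (diag_block_mat (map (\<lambda>b. pencil_poly (fst b) (snd b)) (b # bs)))"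
    have i': "i < dim_row A1 + dim_row ?D1" and j': "j < dim_col A1 + dim_col ?D1"
      using i j by (simp_all add: b Let_def pencil_index dD')
    show "pencil_poly (diag_block_mat (map fst (b # bs))) (diag_block_mat (map snd (b # bs))) $$ (i, j) =
          diag_block_mat (map (\<lambda>b. pencil_poly (fst b) (snd b)) (b # bs)) $$ (i, j)"
      using i' j' IH[symmetric] dA dD dD'
      by (simp add: b Let_def pencil_index del: IH)
  qed (simp_all add: b Let_def pencil_index dD')
qed

fun Eb :: "bool \<Rightarrow> blk \<Rightarrow> complex poly mat" where
  "Eb c (BLT k) = transpose_mat (if c then Sk k else S0 k)"
| "Eb c (BL k) = 1\<^sub>m k" | "Eb c (BF p) = 1\<^sub>m (fst p)" | "Eb c (BI k) = 1\<^sub>m k"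

fun Fb :: "bool \<Rightarrow> blk \<Rightarrow> complex poly mat" where
  "Fb d (BL k) = (if d then Sk k else S0 k)"
| "Fb d (BLT k) = 1\<^sub>m k" | "Fb d (BF p) = 1\<^sub>m (fst p)" | "Fb d (BI k) = 1\<^sub>m k"

fun ex :: "bool \<Rightarrow> bool \<Rightarrow> blk \<Rightarrow> nat" where
  "ex c d (BL k) = (if d then k else 0)" | "ex c d (BLT k) = (if c then k else 0)"
| "ex c d (BF p) = 0" | "ex c d (BI k) = 0"

fun gb :: "blk \<Rightarrow> complex poly" where
  "gb (BF p) = det (Kb (BF p))" | "gb (BL k) = 1" | "gb (BLT k) = 1" | "gb (BI k) = 1"

fun Xb :: "blk \<Rightarrow> complex poly mat" where
  "Xb (BL k) = 1\<^sub>m k" | "Xb b = Kb b"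
fun Yb :: "blk \<Rightarrow> complex poly mat" where
  "Yb (BL k) = Kb (BL k)" | "Yb b = 1\<^sub>m (rb b)"

lemma pL_carrier: "pL k \<in> carrier_mat k (Suc k)" unfolding pL_def by auto
lemma S_carrier: "Sk k \<in> carrier_mat (Suc k) k" "S0 k \<in> carrier_mat (Suc k) k"
  unfolding Sk_def S0_def by auto

lemma Kb_carrier: "Kb b \<in> carrier_mat (dim_row (Kb b)) (dim_col (Kb b))" by auto

lemma block_dims: "dim_col (Eb c b) = dim_row (Kb b)" "dim_col (Kb b) = dim_row (Fb d b)"
  "dim_row (Eb c b) = rb b" "dim_col (Fb d b) = rb b"
  by (cases b, auto simp: Kb_BL Kb_BLT Kb_BF Kb_BI pL_def Sk_def S0_def split: prod.splits)+

lemma block_det: "det (Eb c b * Kb b * Fb d b) = xp ^ (ex c d b) * gb b"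
proof (cases b)
  case (BL k)
  have "Eb c b * Kb b * Fb d b = pL k * (if d then Sk k else S0 k)"
    using pL_carrier[of k] by (simp add: BL Kb_BL)
  then show ?thesis by (simp add: BL det_pL_Sk det_pL_S0)
next
  case (BLT k)
  have "Eb c b * Kb b * Fb d b = transpose_mat (if c then Sk k else S0 k) * transpose_mat (pL k)"
    using pL_carrier[of k] S_carrier[of k] by (simp add: BLT Kb_BLT)
  also have "\<dots> = transpose_mat (pL k * (if c then Sk k else S0 k))"
    by (rule transpose_mult[symmetric, of _ k "Suc k" _ k], insert pL_carrier[of k] S_carrier[of k], auto)
  finally have "det (Eb c b * Kb b * Fb d b) = det (pL k * (if c then Sk k else S0 k))"
    using det_transpose[of "pL k * (if c then Sk k else S0 k)" k] pL_carrier[of k] S_carrier[of k] by auto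
  then show ?thesis by (simp add: BLT det_pL_Sk det_pL_S0)
next
  case (BF p)
  obtain k \<mu> where p: "p = (k,\<mu>)" by force
  have "Kb b \<in> carrier_mat k k" by (simp add: BF p Kb_BF)
  then show ?thesis by (simp add: BF p)
next
  case (BI k)
  have "Kb b \<in> carrier_mat k k" by (simp add: BI Kb_BI)
  then show ?thesis using det_Kb_BI[of k] by (simp add: BI)
qed

lemma gb_nz: "gb b \<noteq> 0"
  by (cases b, auto simp: det_Kb_BF)

lemma block_prod_carrier: "Eb c b * Kb b * Fb d b \<in> carrier_mat (rb b) (rb b)"
  using block_dims(3)[of c b] block_dims(4)[of d b] by auto

lemma XY: "Xb b * Yb b = Kb b" "dim_col (Xb b) = rb b" "dim_row (Yb b) = rb b"
  "dim_row (Xb b) = dim_row (Kb b)"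
  by (cases b; auto simp: Kb_BL Kb_BLT Kb_BF Kb_BI pL_def split: prod.splits)+


lemma rank_mult_le:
  fixes A :: "'a::field mat"
  assumes A: "A \<in> carrier_mat nr t" and B: "B \<in> carrier_mat t nc"
  shows "vec_space.rank nr (A*B) \<le> t"
proof -
  define S where "S j = mat nr nc (\<lambda>(i,l). \<Sum>k<j. A$$(i,k)*B$$(k,l))" for j
  have "vec_space.rank nr (S j) \<le> j" for j
  proof (induct j)
    case 0
    have "S 0 = 0\<^sub>m nr nc" unfolding S_def by (intro eq_matI, auto)
    then show ?case using vec_space.rank_0I[of nr nc] by simp
  next
    case (Suc j)
    define R where "R = mat nr nc (\<lambda>(i,l). A$$(i,j) * B$$(j,l))"
    have "S (Suc j) = S j + R" unfolding S_def R_def by (intro eq_matI, auto)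
    moreover have "vec_space.rank nr R \<le> 1"
      by (rule vec_space.rank_le_1_product_entries[of R nr nc "\<lambda>i. A$$(i,j)" "\<lambda>l. B$$(j,l)"],
          auto simp: R_def)
    moreover have "vec_space.rank nr (S j + R) \<le> vec_space.rank nr (S j) + vec_space.rank nr R"
      by (rule vec_space.rank_subadditive[of _ nr nc], auto simp: S_def R_def)
    ultimately show ?case using Suc by simp
  qed
  moreover have "A * B = S t"
    unfolding S_def using A B by (intro eq_matI, auto simp: scalar_prod_def lessThan_atLeast0)
  ultimately show ?thesis by simp
qed


lemma det_pad_zero:
  fixes M N :: "'a::comm_ring_1 mat"
  assumes M: "M \<in> carrier_mat p r" and N: "N \<in> carrier_mat r p" and rp: "r < p"
  shows "det (M * N) = 0"
proof -
  define M0 where "M0 = mat p p (\<lambda>(i,j). if j < r then M$$(i,j) else 0)"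
  define N0 where "N0 = mat p p (\<lambda>(i,j). if i < r then N$$(i,j) else 0)"
  have "M * N = M0 * N0"
  proof (rule eq_matI)
    fix i j assume i: "i < dim_row (M0 * N0)" and j: "j < dim_col (M0 * N0)"
    have "(M0 * N0) $$ (i,j) = (\<Sum>l\<in>{0..<p}. (if l < r then M$$(i,l) * N$$(l,j) else 0))"
      using i j unfolding M0_def N0_def by (simp add: scalar_prod_def, intro sum.cong, auto)
    also have "\<dots> = (\<Sum>l\<in>{0..<p} \<inter> {l. l < r}. M$$(i,l) * N$$(l,j))"
      by (simp add: sum.inter_restrict)
    also have "{0..<p} \<inter> {l. l < r} = {0..<r}" using rp by auto
    also have "(\<Sum>l\<in>{0..<r}. M$$(i,l) * N$$(l,j)) = (M * N) $$ (i,j)"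
      using i j M N unfolding M0_def N0_def by (simp add: scalar_prod_def)
    finally show "(M * N) $$ (i,j) = (M0 * N0) $$ (i,j)" by simp
  qed (insert M N, auto simp: M0_def N0_def)
  also have "det (M0 * N0) = det M0 * det N0"
    by (rule det_mult, auto simp: M0_def N0_def)
  also have "det N0 = 0"
  proof -
    have N0c: "N0 \<in> carrier_mat p p" unfolding N0_def by auto
    have "det N0 = (\<Sum>q \<in> {q. q permutes {0..<p}}. signof q * (\<Prod>i = 0..<p. N0 $$ (i, q i)))"
      by (rule det_def'[OF N0c])
    also have "\<dots> = 0"
    proof (rule sum.neutral, intro ballI)
      fix q assume "q \<in> {q. q permutes {0..<p}}"
      hence q: "q permutes {0..<p}" by auto
      have "q r < p" using permutes_in_image[OF q] rp by auto
      hence "N0 $$ (r, q r) = 0" using rp unfolding N0_def by auto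
      hence "(\<Prod>i = 0..<p. N0 $$ (i, q i)) = 0" using rp by (intro prod_zero, auto)
      thus "signof q * (\<Prod>i = 0..<p. N0 $$ (i, q i)) = 0" by simp
    qed
    finally show ?thesis .
  qed
  finally show ?thesis by simp
qed


interpretation cp: comm_ring_hom "\<lambda>c::complex. [:c:]"
  by (unfold_locales, auto)

interpretation tf: comm_ring_hom "to_fract :: complex poly \<Rightarrow> complex poly fract"
  by (unfold_locales, auto)

abbreviation cm :: "complex mat \<Rightarrow> complex poly mat" where
  "cm M \<equiv> map_mat (\<lambda>c. [:c:]) M"

lemma pencil_eq: assumes "A \<in> carrier_mat m n" "B \<in> carrier_mat m n"
  shows "pencil_poly A B = cm A + [:0,1:] \<cdot>\<^sub>m cm B"
  using assms unfolding pencil_poly_def by (intro eq_matI, auto)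

lemma constmI: "(\<And>i j. i < dim_row M \<Longrightarrow> j < dim_col M \<Longrightarrow> degree (M$$(i,j)) = 0) \<Longrightarrow> constm M"
  unfolding constm_def by force

lemma constm_cm: "constm (cm M)"
  by (rule constmI, auto)

lemma constm_diag: "\<forall>x\<in>set As. constm x \<Longrightarrow> constm (diag_block_mat As)"
  using elements_diag_block_mat[of As] unfolding constm_def by fastforce

lemma constm_Eb: "constm (Eb c b)"
  by (cases b; rule constmI; auto simp: Sk_def S0_def)

lemma constm_Fb: "constm (Fb d b)"
  by (cases b; rule constmI; auto simp: Sk_def S0_def)

lemma vdeg_ge: "i < dim_vec u \<Longrightarrow> degree (u $ i) \<le> vdeg u"
  unfolding vdeg_def by (rule Max_ge, auto)

lemma prod_list_pow: "prod_list (map (\<lambda>b. (x::'a::comm_monoid_mult)^(f b) * g b) l)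
   = x ^ (sum_list (map f l)) * prod_list (map g l)"
  by (induct l, auto simp: power_add mult_ac)

lemma pencil_transform:
  assumes A: "A \<in> carrier_mat m n" and B: "B \<in> carrier_mat m n"
    and P: "P \<in> carrier_mat m m" and R: "R \<in> carrier_mat n n"
  shows "pencil_poly (P*A*R) (P*B*R) = cm P * pencil_poly A B * cm R"
proof -
  have cA: "cm A \<in> carrier_mat m n" and cB: "cm B \<in> carrier_mat m n"
    and cP: "cm P \<in> carrier_mat m m" and cR: "cm R \<in> carrier_mat n n" using A B P R by auto
  have "pencil_poly (P*A*R) (P*B*R) = cm (P*A*R) + xp \<cdot>\<^sub>m cm (P*B*R)"
    by (rule pencil_eq, insert A B P R, auto)
  also have "cm (P*A*R) = cm (P*A) * cm R"
    by (rule cp.mat_hom_mult[of _ m n], insert A P R, auto)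
  also have "cm (P*A) = cm P * cm A"
    by (rule cp.mat_hom_mult[of _ m m], insert A P R, auto)
  also have "cm (P*B*R) = cm (P*B) * cm R"
    by (rule cp.mat_hom_mult[of _ m n], insert B P R, auto)
  also have "cm (P*B) = cm P * cm B"
    by (rule cp.mat_hom_mult[of _ m m], insert B P R, auto)
  also have "xp \<cdot>\<^sub>m (cm P * cm B * cm R) = cm P * (xp \<cdot>\<^sub>m cm B) * cm R"
    using cB cP cR by (simp add: mult_smult_distrib[of _ m m] mult_smult_assoc_mat[of _ m n])
  also have "cm P * cm A * cm R + cm P * (xp \<cdot>\<^sub>m cm B) * cm R = (cm P * cm A + cm P * (xp \<cdot>\<^sub>m cm B)) * cm R"
    by (rule add_mult_distrib_mat[symmetric, of _ m n], insert cA cB cP cR, auto)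
  also have "cm P * cm A + cm P * (xp \<cdot>\<^sub>m cm B) = cm P * (cm A + xp \<cdot>\<^sub>m cm B)"
    by (rule mult_add_distrib_mat[symmetric, of _ m m], insert cA cB cP cR, auto)
  also have "cm A + xp \<cdot>\<^sub>m cm B = pencil_poly A B" by (rule pencil_eq[symmetric, OF A B])
  finally show ?thesis .
qed


theorem lemma3p3:
  fixes m n r a :: nat and A B :: "complex mat"
  assumes "m > 0" "n > 0" "r \<le> min m n" "a \<le> r"
    and "A \<in> carrier_mat m n" "B \<in> carrier_mat m n"
    and "in_C m n a r A B"
    and "normal_rank A B = r"
  shows "\<forall>eps eta fin infb. kcf A B eps eta fin infb \<longrightarrow> sum_list eps \<le> a \<and> sum_list eta \<le> r - a"
proof (intro allI impI)
  fix eps eta fin infb assume kcf: "kcf A B eps eta fin infb"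
  note A = assms(5) and B = assms(6)
  define bl where "bl = map BL eps @ map BLT eta @ map BF fin @ map BI infb"
  have blocks: "map L_block eps @ map LT_block eta @ map fin_block fin @ map inf_block infb = map orig bl"
    by (simp add: bl_def o_def)
  from kcf obtain P R where P: "P \<in> carrier_mat m m" and R: "R \<in> carrier_mat n n"
    and Pi: "invertible_mat P" and Ri: "invertible_mat R"
    and PAR: "P * A * R = diag_block_mat (map fst (map orig bl))"
    and PBR: "P * B * R = diag_block_mat (map snd (map orig bl))"
    unfolding kcf_def Let_def blocks using A by auto
  define pp where "pp = pencil_poly A B"
  define K where "K = diag_block_mat (map Kb bl)"
  have K1: "pencil_poly (P*A*R) (P*B*R) = K"
    unfolding PAR PBR K_def
    by (subst pencil_diag, insert orig_dims, auto simp: Kb_def[abs_def] o_def)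
  have K2: "K = cm P * pp * cm R"
    unfolding K1[symmetric] pp_def by (rule pencil_transform[OF A B P R])
  have ppc: "pp \<in> carrier_mat m n" unfolding pp_def using A by (auto simp: pencil_index)
  have Kc: "K \<in> carrier_mat m n" unfolding K2 using P R ppc by auto
  from assms(7) obtain u v where uv: "\<forall>k<r. u k \<in> carrier_vec m \<and> v k \<in> carrier_vec n \<and>
               vdeg (u k) \<le> 1 \<and> vdeg (v k) \<le> 1"
    and ua: "\<forall>k<a. vdeg (u k) = 0" and va: "\<forall>k. a \<le> k \<and> k < r \<longrightarrow> vdeg (v k) = 0"
    and ppe: "pencil_poly A B = mat m n (\<lambda>(i,j). \<Sum>k<r. u k $ i * v k $ j)"
    unfolding in_C_def by blast
  define W where "W = mat m r (\<lambda>(i,k). u k $ i)"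
  define Zt where "Zt = mat r n (\<lambda>(k,j). v k $ j)"
  have Wc: "W \<in> carrier_mat m r" and Ztc: "Zt \<in> carrier_mat r n" unfolding W_def Zt_def by auto
  have ppWZ: "pp = W * Zt"
    unfolding pp_def ppe W_def Zt_def by (intro eq_matI, auto simp: scalar_prod_def lessThan_atLeast0)
  have colW: "colst a W" unfolding colst_def W_def
  proof (intro allI impI)
    fix i k assume i: "i < dim_row (mat m r (\<lambda>(i,k). u k $ i))" and k: "k < dim_col (mat m r (\<lambda>(i,k). u k $ i))"
    have "degree (u k $ i) \<le> vdeg (u k)" using i k uv by (intro vdeg_ge, auto)
    also have "\<dots> \<le> (if k < a then 0 else 1)" using ua uv k by auto
    finally show "degree (mat m r (\<lambda>(i,k). u k $ i) $$ (i,k)) \<le> (if k < a then 0 else 1)" using i k by simp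
  qed
  have rowZ: "rowst a Zt" unfolding rowst_def Zt_def
  proof (intro allI impI)
    fix k j assume k: "k < dim_row (mat r n (\<lambda>(k,j). v k $ j))" and j: "j < dim_col (mat r n (\<lambda>(k,j). v k $ j))"
    have "degree (v k $ j) \<le> vdeg (v k)" using j k uv by (intro vdeg_ge, auto)
    also have "\<dots> \<le> (if k < a then 1 else 0)" using va uv k by auto
    finally show "degree (mat r n (\<lambda>(k,j). v k $ j) $$ (k,j)) \<le> (if k < a then 1 else 0)" using j k by simp
  qed
  define W' where "W' = cm P * W"
  define Z' where "Z' = Zt * cm R"
  have W'c: "W' \<in> carrier_mat m r" and Z'c: "Z' \<in> carrier_mat r n"
    unfolding W'_def Z'_def using P R Wc Ztc by auto
  have cP: "cm P \<in> carrier_mat m m" and cR: "cm R \<in> carrier_mat n n" using P R by auto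
  have KWZ: "K = W' * Z'"
  proof -
    have "K = cm P * (W * Zt) * cm R" unfolding K2 ppWZ ..
    also have "\<dots> = cm P * ((W * Zt) * cm R)" using cP cR Wc Ztc by (intro assoc_mult_mat, auto)
    also have "(W * Zt) * cm R = W * (Zt * cm R)" using cR Wc Ztc by (intro assoc_mult_mat, auto)
    also have "cm P * (W * (Zt * cm R)) = (cm P * W) * (Zt * cm R)" using cP cR Wc Ztc by (intro assoc_mult_mat[symmetric], auto)
    finally show ?thesis unfolding W'_def Z'_def .
  qed
  have colW': "colst a W'" unfolding W'_def by (rule constm_mult_colst[OF constm_cm colW], insert P Wc, auto)
  have rowZ': "rowst a Z'" unfolding Z'_def by (rule rowst_mult_constm[OF rowZ constm_cm], insert R Ztc, auto)
  define \<rho> where "\<rho> = sum_list (map rb bl)"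
  define E where "E c = diag_block_mat (map (Eb c) bl)" for c
  define F where "F d = diag_block_mat (map (Fb d) bl)" for d
  have dK: "dim_row K = sum_list (map (\<lambda>b. dim_row (Kb b)) bl)" "dim_col K = sum_list (map (\<lambda>b. dim_col (Kb b)) bl)"
    unfolding K_def by (simp_all add: dim_diag_block_mat o_def)
  have Ec: "E c \<in> carrier_mat \<rho> m" for c
  proof -
    have "dim_row (E c) = \<rho>" unfolding E_def \<rho>_def by (simp add: dim_diag_block_mat o_def block_dims)
    moreover have "dim_col (E c) = dim_row K" unfolding E_def dK by (simp add: dim_diag_block_mat o_def block_dims)
    ultimately show ?thesis using Kc by auto
  qed
  have Fc: "F d \<in> carrier_mat n \<rho>" for d
  proof -
    have "dim_col (F d) = \<rho>" unfolding F_def \<rho>_def by (simp add: dim_diag_block_mat o_def block_dims)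
    moreover have "dim_row (F d) = dim_col K" unfolding F_def dK by (simp add: dim_diag_block_mat o_def block_dims(2)[symmetric])
    ultimately show ?thesis using Kc by auto
  qed
  have EKF: "E c * K * F d = diag_block_mat (map (\<lambda>b. Eb c b * Kb b * Fb d b) bl)" for c d
  proof -
    have "E c * K = diag_block_mat (map (\<lambda>b. Eb c b * Kb b) bl)"
      unfolding E_def K_def by (rule diag_mult, simp add: block_dims)
    hence "E c * K * F d = diag_block_mat (map (\<lambda>b. Eb c b * Kb b) bl) * diag_block_mat (map (Fb d) bl)"
      unfolding F_def by simp
    also have "\<dots> = diag_block_mat (map (\<lambda>b. Eb c b * Kb b * Fb d b) bl)"
      by (rule diag_mult, simp add: block_dims(2)[symmetric])
    finally show ?thesis .
  qed
  define G where "G = prod_list (map gb bl)"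
  have Gnz: "G \<noteq> 0" unfolding G_def using gb_nz by (auto simp: prod_list_zero_iff)
  have exsum: "sum_list (map (ex c d) bl) = (if d then sum_list eps else 0) + (if c then sum_list eta else 0)" for c d
    by (cases c; cases d; simp add: bl_def o_def)
  have detM: "det (E c * K * F d) = xp ^ ((if d then sum_list eps else 0) + (if c then sum_list eta else 0)) * G" for c d
  proof -
    have "det (E c * K * F d) = prod_list (map det (map (\<lambda>b. Eb c b * Kb b * Fb d b) bl))"
      unfolding EKF by (rule det_diag, simp add: block_dims)
    also have "\<dots> = prod_list (map (\<lambda>b. xp ^ (ex c d b) * gb b) bl)"
      by (simp add: o_def block_det)
    also have "\<dots> = xp ^ (sum_list (map (ex c d) bl)) * G" unfolding G_def by (rule prod_list_pow)
    finally show ?thesis unfolding exsum .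
  qed
  have EW: "E c * W' \<in> carrier_mat \<rho> r" for c using Ec[of c] W'c by (rule mult_carrier_mat)
  have ZF: "Z' * F d \<in> carrier_mat r \<rho>" for d using Z'c Fc[of d] by (rule mult_carrier_mat)
  have M_fact: "E c * K * F d = (E c * W') * (Z' * F d)" for c d
  proof -
    have "E c * K * F d = E c * (W' * Z') * F d" unfolding KWZ ..
    also have "\<dots> = E c * ((W' * Z') * F d)" using Ec[of c] Fc[of d] W'c Z'c by (intro assoc_mult_mat, auto)
    also have "(W' * Z') * F d = W' * (Z' * F d)" using Fc[of d] W'c Z'c by (intro assoc_mult_mat, auto)
    also have "E c * (W' * (Z' * F d)) = (E c * W') * (Z' * F d)" using Ec[of c] Fc[of d] W'c Z'c by (intro assoc_mult_mat[symmetric], auto)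
    finally show ?thesis .
  qed
  have rho_le: "\<rho> \<le> r"
  proof (rule ccontr)
    assume "\<not> \<rho> \<le> r"
    hence "det ((E False * W') * (Z' * F False)) = 0" by (intro det_pad_zero[OF EW ZF], auto)
    moreover have "det (E False * K * F False) = G" using detM[of False False] by simp
    ultimately show False using Gnz M_fact[of False False] by simp
  qed
  have rho_ge: "r \<le> \<rho>"
  proof -
    from Pi obtain Pv where Pv1: "P * Pv = 1\<^sub>m m" and Pv2: "Pv * P = 1\<^sub>m (dim_row Pv)"
      unfolding invertible_mat_def inverts_mat_def using P by auto
    have Pvc: "Pv \<in> carrier_mat m m"
    proof -
      have "dim_col Pv = m" using arg_cong[OF Pv1, of dim_col] P by simp
      moreover have "dim_row Pv = m" using arg_cong[OF Pv2, of dim_col] P by simp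
      ultimately show ?thesis by auto
    qed
    from Ri obtain Rv where Rv1: "R * Rv = 1\<^sub>m n" and Rv2: "Rv * R = 1\<^sub>m (dim_row Rv)"
      unfolding invertible_mat_def inverts_mat_def using R by auto
    have Rvc: "Rv \<in> carrier_mat n n"
    proof -
      have "dim_col Rv = n" using arg_cong[OF Rv1, of dim_col] R by simp
      moreover have "dim_row Rv = n" using arg_cong[OF Rv2, of dim_col] R by simp
      ultimately show ?thesis by auto
    qed
    have cPv: "cm Pv \<in> carrier_mat m m" and cRv: "cm Rv \<in> carrier_mat n n" using Pvc Rvc by auto
    have PvP: "cm Pv * cm P = 1\<^sub>m m"
    proof -
      have "cm Pv * cm P = cm (Pv * P)" by (rule cp.mat_hom_mult[symmetric, OF Pvc P])
      also have "Pv * P = 1\<^sub>m m" using Pv2 Pvc by simp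
      finally show ?thesis by (simp add: cp.mat_hom_one)
    qed
    have RRv: "cm R * cm Rv = 1\<^sub>m n"
    proof -
      have "cm R * cm Rv = cm (R * Rv)" by (rule cp.mat_hom_mult[symmetric, OF R Rvc])
      also have "R * Rv = 1\<^sub>m n" using Rv1 by simp
      finally show ?thesis by (simp add: cp.mat_hom_one)
    qed
    have ppK: "pp = cm Pv * K * cm Rv"
    proof -
      have "cm Pv * K * cm Rv = cm Pv * (cm P * pp * cm R) * cm Rv" unfolding K2 ..
      also have "\<dots> = (cm Pv * cm P) * pp * (cm R * cm Rv)"
        using cPv cP cR cRv ppc by (simp add: assoc_mult_mat[of _ m m _ n _ n])
      also have "\<dots> = pp" unfolding PvP RRv using ppc by simp
      finally show ?thesis by simp
    qed
    define X where "X = diag_block_mat (map Xb bl)"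
    define Y where "Y = diag_block_mat (map Yb bl)"
    have XYK: "X * Y = K" unfolding X_def Y_def K_def
      by (subst diag_mult, auto simp: XY)
    have Xc: "X \<in> carrier_mat m \<rho>"
    proof -
      have "dim_row X = dim_row K" unfolding X_def dK by (simp add: dim_diag_block_mat o_def XY)
      moreover have "dim_col X = \<rho>" unfolding X_def \<rho>_def by (simp add: dim_diag_block_mat o_def XY)
      ultimately show ?thesis using Kc by auto
    qed
    have Yc: "Y \<in> carrier_mat \<rho> n"
    proof -
      have "dim_col Y = dim_col K" unfolding XYK[symmetric] by simp
      moreover have "dim_row Y = \<rho>" unfolding Y_def \<rho>_def by (simp add: dim_diag_block_mat o_def XY)
      ultimately show ?thesis using Kc by auto
    qed
    have "pp = cm Pv * (X * Y) * cm Rv" unfolding ppK XYK ..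
    also have "\<dots> = cm Pv * ((X * Y) * cm Rv)" using cPv cRv Xc Yc by (intro assoc_mult_mat, auto)
    also have "(X * Y) * cm Rv = X * (Y * cm Rv)" using cRv Xc Yc by (intro assoc_mult_mat, auto)
    also have "cm Pv * (X * (Y * cm Rv)) = (cm Pv * X) * (Y * cm Rv)" using cPv cRv Xc Yc by (intro assoc_mult_mat[symmetric], auto)
    finally have ppXY: "pp = (cm Pv * X) * (Y * cm Rv)" .
    have c1: "cm Pv * X \<in> carrier_mat m \<rho>" using cPv Xc by (rule mult_carrier_mat)
    have c2: "Y * cm Rv \<in> carrier_mat \<rho> n" using Yc cRv by (rule mult_carrier_mat)
    have "map_mat to_fract pp = map_mat to_fract (cm Pv * X) * map_mat to_fract (Y * cm Rv)"
      unfolding ppXY by (rule tf.mat_hom_mult[OF c1 c2])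
    moreover have "r = vec_space.rank m (map_mat to_fract pp)"
      using assms(8) A unfolding normal_rank_def pp_def by simp
    ultimately have "r = vec_space.rank m (map_mat to_fract (cm Pv * X) * map_mat to_fract (Y * cm Rv))" by simp
    also have "\<dots> \<le> \<rho>" by (rule rank_mult_le, insert c1 c2, auto)
    finally show ?thesis .
  qed
  have rr: "\<rho> = r" using rho_le rho_ge by simp
  have EWr: "E c * W' \<in> carrier_mat r r" for c using EW[of c] rr by simp
  have ZFr: "Z' * F d \<in> carrier_mat r r" for d using ZF[of d] rr by simp
  have dd: "det (E c * K * F d) = det (E c * W') * det (Z' * F d)" for c d
    unfolding M_fact by (rule det_mult[OF EWr ZFr])
  define a1 where "a1 = det (E False * W')"
  define a2 where "a2 = det (E True * W')"
  define b0 where "b0 = det (Z' * F False)"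
  define b1 where "b1 = det (Z' * F True)"
  have e00: "a1 * b0 = G" using detM[of False False] dd[of False False] unfolding a1_def b0_def by simp
  have e01: "a1 * b1 = xp ^ sum_list eps * (a1 * b0)" using detM[of False True] dd[of False True] e00
    unfolding a1_def b1_def b0_def by simp
  have e10: "a2 * b0 = xp ^ sum_list eta * (a1 * b0)" using detM[of True False] dd[of True False] e00
    unfolding a2_def a1_def b0_def by simp
  have a1nz: "a1 \<noteq> 0" and b0nz: "b0 \<noteq> 0" using e00 Gnz by auto
  have b1e: "b1 = xp ^ sum_list eps * b0" using e01 a1nz by (simp add: mult_ac)
  have a2e: "a2 = xp ^ sum_list eta * a1" using e10 b0nz by (simp add: mult_ac)
  have xpnz: "xp ^ k \<noteq> 0" for k by simp
  have dxp: "degree (xp ^ k) = k" for k by (simp add: degree_power_eq)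
  have "degree b1 = sum_list eps + degree b0" unfolding b1e
    by (subst degree_mult_eq[OF xpnz b0nz], subst dxp, simp)
  moreover have "degree b1 \<le> a"
  proof -
    have "rowst a (Z' * F True)"
    proof -
      have "constm (F True)" unfolding F_def by (rule constm_diag, insert constm_Fb, auto)
      thus ?thesis by (rule rowst_mult_constm[OF rowZ'], insert Fc[of True] Z'c, auto)
    qed
    thus ?thesis unfolding b1_def using det_rowst ZFr assms(4) by blast
  qed
  moreover have "degree a2 = sum_list eta + degree a1" unfolding a2e
    by (subst degree_mult_eq[OF xpnz a1nz], subst dxp, simp)
  moreover have "degree a2 \<le> r - a"
  proof -
    have "colst a (E True * W')"
    proof -
      have "constm (E True)" unfolding E_def by (rule constm_diag, insert constm_Eb, auto)
      thus ?thesis by (rule constm_mult_colst[OF _ colW'], insert Ec[of True] W'c, auto)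
    qed
    thus ?thesis unfolding a2_def using det_colst EWr assms(4) by blast
  qed
  ultimately show "sum_list eps \<le> a \<and> sum_list eta \<le> r - a" by linarith
qed


end
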